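(* Let $\mathbb{R}^n$ and $\mathbb{R}^m$ be equipped with arbitrary norms $\|\cdot\|$, with dual norms $\|\cdot\|_*$. Let $P:\mathbb{R}^n\to\mathbb{R}^m$ be differentiable on all of $\mathbb{R}^n$ with $\|P'(x^a)-P'(x^b)\|\le L\|x^a-x^b\|$ for all $x^a,x^b\in\mathbb{R}^n$ (some $L>0$), and suppose there is $\mu>0$ with $\|P'(x)^T h\|_*\ge\mu\|h\|_*$ for all $x\in\mathbb{R}^n$, $h\in\mathbb{R}^m$. Then for any $x^0\in\mathbb{R}^n$ the sequence generated by Algorithm 1 converges to a solution of $P(x)=0$.
   Context: For a vector $c$, the dual norm is $\|c\|_*=\sup_{\|x\|=1}(c,x)$; the norm of $P'(x)$ is the operator norm subordinate to the chosen vector norms. Algorithm 1 (Basic Newton method): starting from $x^0$, for $k\ge0$ let $z^k$ be any solution of $\min\{\|z\|: P'(x^k)z=P(x^k)\}$ and set $x^{k+1}=x^k-\min\{1,\frac{\mu^2}{L\|P(x^k)\|}\}z^k$ (with step $1$ and $z^k=0$ if $P(x^k)=0$). *)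

theory Defs
  imports "HOL-Analysis.Analysis"
begin

definition is_norm :: "('a::real_vector \<Rightarrow> real) \<Rightarrow> bool" where
  "is_norm N \<longleftrightarrow>
     (\<forall>x. N x = 0 \<longleftrightarrow> x = 0) \<and>
     (\<forall>c x. N (c *\<^sub>R x) = \<bar>c\<bar> * N x) \<and>
     (\<forall>x y. N (x + y) \<le> N x + N y)"

definition dual_norm :: "(real^'n \<Rightarrow> real) \<Rightarrow> real^'n \<Rightarrow> real" where
  "dual_norm N c = Sup {c \<bullet> x | x. N x = 1}"

definition op_norm :: "(real^'n \<Rightarrow> real) \<Rightarrow> (real^'m \<Rightarrow> real) \<Rightarrow> real^'n^'m \<Rightarrow> real" where
  "op_norm Nx Ny A = Sup {Ny (A *v x) | x. Nx x = 1}"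

end

theory Submission
  imports Defs
begin

lemma isn_zero: "is_norm N \<Longrightarrow> N 0 = 0" by (simp add: is_norm_def)
lemma isn_scale: "is_norm N \<Longrightarrow> N (c *\<^sub>R x) = \<bar>c\<bar> * N x" by (simp add: is_norm_def)
lemma isn_tri: "is_norm N \<Longrightarrow> N (x + y) \<le> N x + N y" by (simp add: is_norm_def)
lemma isn_eq0: "is_norm N \<Longrightarrow> N x = 0 \<longleftrightarrow> x = 0" by (simp add: is_norm_def)
lemma isn_minus: "is_norm N \<Longrightarrow> N (- x) = N x"
  using isn_scale[of N "-1" x] by simp
lemma isn_nonneg: "is_norm N \<Longrightarrow> N x \<ge> 0"
proof -
  assume n: "is_norm N"
  have "N (x + - x) \<le> N x + N (- x)" by (rule isn_tri[OF n])
  thus ?thesis using isn_minus[OF n] isn_zero[OF n] by simp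
qed
lemma isn_diff: "is_norm N \<Longrightarrow> N (x - y) \<le> N x + N y"
  using isn_tri[of N x "-y"] isn_minus[of N y] by simp
lemma isn_rev: "is_norm N \<Longrightarrow> \<bar>N x - N y\<bar> \<le> N (x - y)"
proof -
  assume n: "is_norm N"
  have a: "N x \<le> N (x - y) + N y" using isn_tri[OF n, of "x-y" y] by simp
  have b: "N y \<le> N (y - x) + N x" using isn_tri[OF n, of "y-x" x] by simp
  have "N (y - x) = N (x - y)" using isn_minus[OF n, of "x - y"] by simp
  thus ?thesis using a b by linarith
qed
lemma isn_sum: "is_norm N \<Longrightarrow> N (sum f A) \<le> (\<Sum>i\<in>A. N (f i))"
proof (induction A rule: infinite_finite_induct)
  case (insert a A) thus ?case using isn_tri[of N "f a" "sum f A"] by simp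
qed (auto simp: isn_zero)

lemma isn_upper:
  fixes N :: "'a::euclidean_space \<Rightarrow> real"
  assumes n: "is_norm N"
  shows "\<exists>C>0. \<forall>x. N x \<le> C * norm x"
proof -
  define C where "C = 1 + (\<Sum>b\<in>Basis. N b)"
  have C0: "C > 0" unfolding C_def using isn_nonneg[OF n] by (simp add: add_pos_nonneg sum_nonneg)
  have "N x \<le> C * norm x" for x
  proof -
    have "N x = N (\<Sum>b\<in>Basis. (x \<bullet> b) *\<^sub>R b)" by (simp add: euclidean_representation)
    also have "\<dots> \<le> (\<Sum>b\<in>Basis. N ((x \<bullet> b) *\<^sub>R b))" by (rule isn_sum[OF n])
    also have "\<dots> = (\<Sum>b\<in>Basis. \<bar>x \<bullet> b\<bar> * N b)" by (simp add: isn_scale[OF n])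
    also have "\<dots> \<le> (\<Sum>b\<in>Basis. norm x * N b)"
      by (intro sum_mono mult_right_mono) (auto simp: Basis_le_norm isn_nonneg[OF n])
    also have "\<dots> \<le> C * norm x" unfolding C_def by (simp add: sum_distrib_left algebra_simps mult.commute)
    finally show ?thesis .
  qed
  thus ?thesis using C0 by blast
qed

lemma isn_cont:
  fixes N :: "'a::euclidean_space \<Rightarrow> real"
  assumes n: "is_norm N"
  shows "continuous_on S N"
proof -
  obtain C where C: "C > 0" "\<And>x. N x \<le> C * norm x" using isn_upper[OF n] by blast
  have "\<bar>N x - N y\<bar> \<le> C * dist x y" for x y
    using isn_rev[OF n, of x y] C(2)[of "x - y"] by (simp add: dist_norm)
  hence "C-lipschitz_on S N" by (intro lipschitz_onI) (use C(1) in \<open>auto simp: dist_real_def\<close>)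
  thus ?thesis by (rule lipschitz_on_continuous_on)
qed

lemma isn_lower:
  fixes N :: "'a::euclidean_space \<Rightarrow> real"
  assumes n: "is_norm N"
  shows "\<exists>c>0. \<forall>x. c * norm x \<le> N x"
proof -
  obtain b :: 'a where b: "b \<in> Basis" using nonempty_Basis by blast
  have ne: "sphere (0::'a) 1 \<noteq> {}" using b by (auto intro!: exI[of _ b])
  obtain y where y: "y \<in> sphere 0 1" "\<And>w. w \<in> sphere 0 1 \<Longrightarrow> N y \<le> N w"
    using continuous_attains_inf[OF compact_sphere ne isn_cont[OF n]] by blast
  have y0: "N y > 0" using y(1) isn_eq0[OF n, of y] isn_nonneg[OF n, of y] by auto
  have "N y * norm x \<le> N x" for x
  proof (cases "x = 0")
    case False
    have "(1 / norm x) *\<^sub>R x \<in> sphere 0 1" using False by simp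
    hence "N y \<le> N ((1 / norm x) *\<^sub>R x)" by (rule y(2))
    also have "\<dots> = N x / norm x" by (simp add: isn_scale[OF n])
    finally show ?thesis using False by (simp add: field_simps)
  qed (simp add: isn_zero[OF n])
  thus ?thesis using y0 by blast
qed


lemma dual_set_ne:
  fixes N :: "real^'n \<Rightarrow> real"
  assumes n: "is_norm N" shows "\<exists>x. N x = 1"
proof -
  obtain b :: "real^'n" where b: "b \<in> Basis" using nonempty_Basis by blast
  hence b0: "b \<noteq> 0" by auto
  have "N ((1 / N b) *\<^sub>R b) = 1"
    using b0 isn_eq0[OF n, of b] isn_nonneg[OF n, of b] by (simp add: isn_scale[OF n])
  thus ?thesis by blast
qed

lemma dual_bdd:
  fixes N :: "real^'n \<Rightarrow> real"
  assumes n: "is_norm N" shows "bdd_above {c \<bullet> x | x. N x = 1}"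
proof -
  obtain k where k: "k > 0" "\<And>x. k * norm x \<le> N x" using isn_lower[OF n] by blast
  have "c \<bullet> x \<le> norm c / k" if "N x = 1" for x
  proof -
    have "norm x \<le> 1 / k" using k(2)[of x] that k(1) by (simp add: field_simps)
    hence "norm c * norm x \<le> norm c * (1 / k)" by (intro mult_left_mono) auto
    hence "norm c * norm x \<le> norm c / k" by simp
    thus ?thesis using norm_cauchy_schwarz[of c x] by linarith
  qed
  thus ?thesis by (auto intro!: bdd_aboveI[of _ "norm c / k"])
qed

lemma dual_ge:
  fixes N :: "real^'n \<Rightarrow> real"
  assumes n: "is_norm N" and "N x = 1" shows "c \<bullet> x \<le> dual_norm N c"
  unfolding dual_norm_def using assms by (intro cSup_upper dual_bdd) auto

lemma dual_le:
  fixes N :: "real^'n \<Rightarrow> real"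
  assumes n: "is_norm N" and "\<And>x. N x = 1 \<Longrightarrow> c \<bullet> x \<le> B" shows "dual_norm N c \<le> B"
  unfolding dual_norm_def using assms dual_set_ne[OF n] by (intro cSup_least) auto

lemma dual_nonneg:
  fixes N :: "real^'n \<Rightarrow> real"
  assumes n: "is_norm N" shows "0 \<le> dual_norm N c"
proof -
  obtain x where x: "N x = 1" using dual_set_ne[OF n] by blast
  have "N (- x) = 1" using x isn_minus[OF n] by simp
  from dual_ge[OF n x, of c] dual_ge[OF n this, of c] show ?thesis by simp
qed

lemma dual_pair:
  fixes N :: "real^'n \<Rightarrow> real"
  assumes n: "is_norm N" shows "c \<bullet> v \<le> dual_norm N c * N v"
proof (cases "v = 0")
  case False
  hence p: "N v > 0" using isn_eq0[OF n, of v] isn_nonneg[OF n, of v] by auto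
  have "N ((1 / N v) *\<^sub>R v) = 1" using p by (simp add: isn_scale[OF n])
  from dual_ge[OF n this, of c] have "(c \<bullet> v) / N v \<le> dual_norm N c" by simp
  thus ?thesis using p by (simp add: field_simps)
qed (simp add: isn_zero[OF n])

lemma convex_sub:
  assumes n: "is_norm N" shows "convex {w. N w \<le> r}"
  unfolding convex_def
proof (intro allI impI ballI, simp)
  fix x y and u v :: real assume a: "N x \<le> r" "N y \<le> r" "0 \<le> u" "0 \<le> v" "u + v = 1"
  have "N (u *\<^sub>R x + v *\<^sub>R y) \<le> u * N x + v * N y"
    using isn_tri[OF n, of "u *\<^sub>R x" "v *\<^sub>R y"] a by (simp add: isn_scale[OF n])
  also have "\<dots> \<le> u * r + v * r" using a by (intro add_mono mult_left_mono) auto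
  also have "\<dots> = r" using a(5) by (metis distrib_left mult.commute mult_1)
  finally show "N (u *\<^sub>R x + v *\<^sub>R y) \<le> r" .
qed

lemma compact_sub:
  fixes N :: "'a::euclidean_space \<Rightarrow> real"
  assumes n: "is_norm N" shows "compact {w. N w \<le> r}"
proof -
  obtain k where k: "k > 0" "\<And>x. k * norm x \<le> N x" using isn_lower[OF n] by blast
  have "closed {w. N w \<le> r}"
    by (rule closed_Collect_le[OF isn_cont[OF n] continuous_on_const])
  moreover have "bounded {w. N w \<le> r}"
    unfolding bounded_iff
  proof (rule exI[of _ "r / k"], clarify)
    fix x assume "N x \<le> r"
    hence "k * norm x \<le> r" using k(2)[of x] by linarith
    thus "norm x \<le> r / k" using k(1) by (simp add: field_simps)
  qed
  ultimately show ?thesis by (simp add: compact_eq_bounded_closed)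
qed

lemma norm_by_dual:
  fixes N :: "real^'n \<Rightarrow> real"
  assumes n: "is_norm N" and h: "\<And>h. dual_norm N h \<le> 1 \<Longrightarrow> h \<bullet> v \<le> B"
  shows "N v \<le> B"
proof (rule ccontr)
  assume "\<not> N v \<le> B"
  hence lt: "B < N v" by simp
  have B0: "0 \<le> B" using h[of 0] dual_le[OF n, of 0 1] by simp
  define r where "r = (B + N v) / 2"
  have r: "B < r" "r < N v" "r > 0" using lt B0 unfolding r_def by auto
  define p where "p = (1 / r) *\<^sub>R v"
  have "N p > 1" unfolding p_def using r by (simp add: isn_scale[OF n] field_simps)
  hence "p \<notin> {w. N w \<le> 1}" by simp
  from separating_hyperplane_closed_point[OF convex_sub[OF n] compact_imp_closed[OF compact_sub[OF n]] this]
  obtain a \<beta> where ab: "a \<bullet> p < \<beta>" "\<And>w. N w \<le> 1 \<Longrightarrow> a \<bullet> w > \<beta>" by auto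
  have b0: "\<beta> < 0" using ab(2)[of 0] by (simp add: isn_zero[OF n])
  define c where "c = (1 / \<beta>) *\<^sub>R a"
  have "dual_norm N c \<le> 1"
  proof (rule dual_le[OF n])
    fix w assume "N w = 1"
    hence "a \<bullet> w > \<beta>" using ab(2) by simp
    thus "c \<bullet> w \<le> 1" unfolding c_def using b0 by (simp add: field_simps)
  qed
  from h[OF this] have "c \<bullet> v \<le> B" .
  moreover have "c \<bullet> p > 1" unfolding c_def using ab(1) b0 by (simp add: field_simps)
  hence "c \<bullet> v > r" unfolding p_def using r by (simp add: field_simps)
  ultimately show False using r by simp
qed

lemma op_norm_bound:
  fixes Nx :: "real^'n \<Rightarrow> real" and Ny :: "real^'m \<Rightarrow> real"
  assumes nx: "is_norm Nx" and ny: "is_norm Ny"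
  shows "Ny (A *v w) \<le> op_norm Nx Ny A * Nx w"
proof -
  obtain C where C: "C > 0" "\<And>x. Ny x \<le> C * norm x" using isn_upper[OF ny] by blast
  obtain k where k: "k > 0" "\<And>x. k * norm x \<le> Nx x" using isn_lower[OF nx] by blast
  obtain K where K: "\<And>x. norm (A *v x) \<le> norm x * K" and K0: "K > 0"
    using bounded_linear.pos_bounded[OF matrix_vector_mul_bounded_linear[of A]] by blast
  have bdd: "bdd_above {Ny (A *v x) | x. Nx x = 1}"
  proof (rule bdd_aboveI[of _ "C * (K / k)"], clarify)
    fix x assume x: "Nx x = 1"
    have nx1: "norm x \<le> 1 / k" using k(2)[of x] x k(1) by (simp add: field_simps)
    have "Ny (A *v x) \<le> C * norm (A *v x)" by (rule C(2))
    also have "\<dots> \<le> C * (norm x * K)" using C(1) K[of x] by (simp add: mult_left_mono)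
    also have "\<dots> \<le> C * ((1/k) * K)" using C(1) K0 nx1 by (intro mult_left_mono mult_right_mono) auto
    finally show "Ny (A *v x) \<le> C * (K / k)" by simp
  qed
  show ?thesis
  proof (cases "w = 0")
    case True thus ?thesis by (simp add: isn_zero[OF nx] isn_zero[OF ny])
  next
    case False
    hence p: "Nx w > 0" using isn_eq0[OF nx, of w] isn_nonneg[OF nx, of w] by auto
    have "Nx ((1 / Nx w) *\<^sub>R w) = 1" using p by (simp add: isn_scale[OF nx])
    hence "Ny (A *v ((1 / Nx w) *\<^sub>R w)) \<le> op_norm Nx Ny A"
      unfolding op_norm_def by (intro cSup_upper[OF _ bdd]) blast
    moreover have "A *v ((1 / Nx w) *\<^sub>R w) = (1 / Nx w) *\<^sub>R (A *v w)"
      by (simp add: matrix_vector_mult_scaleR)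
    ultimately have "Ny (A *v w) / Nx w \<le> op_norm Nx Ny A" using p by (simp add: isn_scale[OF ny])
    thus ?thesis using p by (simp add: field_simps)
  qed
qed


lemma solve_bound:
  fixes A :: "real^'n^'m" and nx :: "real^'n \<Rightarrow> real" and ny :: "real^'m \<Rightarrow> real"
  assumes nx: "is_norm nx" and ny: "is_norm ny" and mu: "\<mu> > 0"
    and reg: "\<And>h. dual_norm nx (transpose A *v h) \<ge> \<mu> * dual_norm ny h"
  shows "\<exists>w. A *v w = b \<and> nx w \<le> ny b / \<mu>"
proof (cases "b = 0")
  case True thus ?thesis by (intro exI[of _ 0]) (simp add: isn_zero[OF nx] isn_zero[OF ny])
next
  case False
  hence p: "ny b > 0" using isn_eq0[OF ny, of b] isn_nonneg[OF ny, of b] by auto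
  define b' where "b' = (1 / ny b) *\<^sub>R b"
  have nb': "ny b' = 1" unfolding b'_def using p by (simp add: isn_scale[OF ny])
  define S where "S = (\<lambda>w. A *v w) ` {w. nx w \<le> 1 / \<mu>}"
  have cS: "compact S" unfolding S_def
    by (intro compact_continuous_image compact_sub[OF nx] linear_continuous_on matrix_vector_mul_bounded_linear)
  have vS: "convex S" unfolding S_def
    by (intro convex_linear_image convex_sub[OF nx] matrix_vector_mul_linear)
  have "b' \<in> S"
  proof (rule ccontr)
    assume "b' \<notin> S"
    from separating_hyperplane_closed_point[OF vS compact_imp_closed[OF cS] this]
    obtain a \<beta> where ab: "a \<bullet> b' < \<beta>" "\<And>s. s \<in> S \<Longrightarrow> a \<bullet> s > \<beta>" by auto
    have "0 \<in> S" unfolding S_def using mu by (auto simp: isn_zero[OF nx] intro!: image_eqI[of _ _ 0])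
    hence b0: "\<beta> < 0" using ab(2) by fastforce
    define c where "c = (1 / \<beta>) *\<^sub>R a"
    have "dual_norm nx (transpose A *v c) \<le> \<mu>"
    proof (rule dual_le[OF nx])
      fix w assume w: "nx w = 1"
      have "(1/\<mu>) *\<^sub>R w \<in> {w. nx w \<le> 1 / \<mu>}" using w mu by (simp add: isn_scale[OF nx])
      hence "A *v ((1/\<mu>) *\<^sub>R w) \<in> S" unfolding S_def by blast
      hence "a \<bullet> (A *v ((1/\<mu>) *\<^sub>R w)) > \<beta>" by (rule ab(2))
      hence "(1/\<mu>) * (a \<bullet> (A *v w)) > \<beta>" by (simp add: matrix_vector_mult_scaleR)
      hence "c \<bullet> (A *v w) < \<mu>" unfolding c_def using mu b0 by (simp add: field_simps)
      moreover have "(transpose A *v c) \<bullet> w = c \<bullet> (A *v w)" by (simp add: dot_lmul_matrix)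
      ultimately show "(transpose A *v c) \<bullet> w \<le> \<mu>" by simp
    qed
    with reg[of c] have "\<mu> * dual_norm ny c \<le> \<mu> * 1" by simp
    hence "dual_norm ny c \<le> 1" using mu by simp
    hence "c \<bullet> b' \<le> 1" using dual_pair[OF ny, of c b'] nb' by simp
    moreover have "c \<bullet> b' > 1" unfolding c_def using ab(1) b0 by (simp add: field_simps)
    ultimately show False by simp
  qed
  then obtain w' where w': "nx w' \<le> 1 / \<mu>" "A *v w' = b'" unfolding S_def by blast
  show ?thesis
  proof (intro exI conjI)
    show "A *v (ny b *\<^sub>R w') = b" using w'(2) p unfolding b'_def by (simp add: matrix_vector_mult_scaleR)
    have "nx (ny b *\<^sub>R w') = ny b * nx w'" using p by (simp add: isn_scale[OF nx])
    also have "\<dots> \<le> ny b * (1 / \<mu>)" using w'(1) p by (intro mult_left_mono) auto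
    finally show "nx (ny b *\<^sub>R w') \<le> ny b / \<mu>" by simp
  qed
qed

lemma mv_neg: "(A::real^'n^'m) *v (- y) = - (A *v y)"
  using matrix_vector_mult_scaleR[of A "-1" y] by simp

lemma taylor_bound:
  fixes P :: "real^'n \<Rightarrow> real^'m" and P' :: "real^'n \<Rightarrow> real^'n^'m"
    and nx :: "real^'n \<Rightarrow> real" and ny :: "real^'m \<Rightarrow> real"
  assumes nx: "is_norm nx" and ny: "is_norm ny"
    and deriv: "\<And>a. (P has_derivative (\<lambda>h. P' a *v h)) (at a)"
    and lip: "\<And>a b. op_norm nx ny (P' a - P' b) \<le> L * nx (a - b)"
    and t: "t \<ge> 0"
  shows "ny (P (x - t *\<^sub>R z) - P x + t *\<^sub>R (P' x *v z)) \<le> L / 2 * t\<^sup>2 * (nx z)\<^sup>2"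
proof (rule norm_by_dual[OF ny])
  fix h assume h: "dual_norm ny h \<le> 1"
  define K where "K = L * (nx z)\<^sup>2"
  define g where "g s = h \<bullet> (P (x - s *\<^sub>R z) - P x + s *\<^sub>R (P' x *v z)) - K / 2 * s\<^sup>2" for s
  define D where "D s = h \<bullet> ((P' x - P' (x - s *\<^sub>R z)) *v z) - K * s" for s
  have dg: "DERIV g s :> D s" for s
  proof -
    have d1: "((\<lambda>s. x - s *\<^sub>R z) has_derivative (\<lambda>d. - (d *\<^sub>R z))) (at s)"
      by (auto intro!: derivative_eq_intros)
    have d2: "((\<lambda>s. P (x - s *\<^sub>R z)) has_derivative (\<lambda>d. P' (x - s *\<^sub>R z) *v (- (d *\<^sub>R z)))) (at s)"
      by (rule has_derivative_compose[OF d1 deriv])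
    show ?thesis unfolding has_field_derivative_def g_def
      apply (rule has_derivative_eq_rhs)
       apply (rule derivative_eq_intros d2 refl)+
      apply (auto simp: D_def fun_eq_iff matrix_vector_mult_scaleR matrix_vector_mult_diff_rdistrib
            inner_diff_right mv_neg algebra_simps)
      done
  qed
  have Dle: "D s \<le> 0" if "0 \<le> s" for s
  proof -
    let ?v = "(P' x - P' (x - s *\<^sub>R z)) *v z"
    have "h \<bullet> ?v \<le> dual_norm ny h * ny ?v" by (rule dual_pair[OF ny])
    also have "\<dots> \<le> ny ?v" using h isn_nonneg[OF ny, of ?v] dual_nonneg[OF ny, of h]
      by (simp add: mult_left_le_one_le)
    also have "\<dots> \<le> op_norm nx ny (P' x - P' (x - s *\<^sub>R z)) * nx z" by (rule op_norm_bound[OF nx ny])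
    also have "\<dots> \<le> (L * nx (x - (x - s *\<^sub>R z))) * nx z"
      by (intro mult_right_mono lip isn_nonneg[OF nx])
    also have "\<dots> = K * s" using that by (simp add: K_def isn_scale[OF nx] power2_eq_square)
    finally show ?thesis unfolding D_def by simp
  qed
  have "g t \<le> g 0"
    by (rule DERIV_nonpos_imp_nonincreasing[OF t]) (use dg Dle in blast)
  moreover have "g 0 = 0" unfolding g_def by simp
  ultimately show "h \<bullet> (P (x - t *\<^sub>R z) - P x + t *\<^sub>R (P' x *v z)) \<le> L / 2 * t\<^sup>2 * (nx z)\<^sup>2"
    unfolding g_def K_def by (simp add: algebra_simps)
qed


lemma one_step:
  fixes P :: "real^'n \<Rightarrow> real^'m" and P' :: "real^'n \<Rightarrow> real^'n^'m"
    and nx :: "real^'n \<Rightarrow> real" and ny :: "real^'m \<Rightarrow> real"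
  assumes nx: "is_norm nx" and ny: "is_norm ny"
    and deriv: "\<And>a. (P has_derivative (\<lambda>h. P' a *v h)) (at a)"
    and lip: "\<And>a b. op_norm nx ny (P' a - P' b) \<le> L * nx (a - b)"
    and L: "L > 0" and mu: "\<mu> > 0"
    and feas: "P' y *v z = P y" and zb: "nx z \<le> ny (P y) / \<mu>" and zz: "P y = 0 \<Longrightarrow> z = 0"
    and tt: "tt = (if P y = 0 then 1 else min 1 (\<mu>\<^sup>2 / (L * ny (P y))))"
  shows "ny (P (y - tt *\<^sub>R z)) \<le> ny (P y)"
    and "ny (P y) \<ge> \<mu>\<^sup>2 / L \<Longrightarrow> ny (P (y - tt *\<^sub>R z)) \<le> ny (P y) - \<mu>\<^sup>2 / (2 * L)"
    and "ny (P y) < \<mu>\<^sup>2 / L \<Longrightarrow> ny (P (y - tt *\<^sub>R z)) \<le> ny (P y) / 2"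
    and "nx ((y - tt *\<^sub>R z) - y) \<le> ny (P y) / \<mu>"
proof -
  define p where "p = ny (P y)"
  have p0: "p \<ge> 0" unfolding p_def by (rule isn_nonneg[OF ny])
  have t01: "0 \<le> tt" "tt \<le> 1" unfolding tt using mu L p0 by (auto simp: p_def)
  have nz0: "nx z \<ge> 0" by (rule isn_nonneg[OF nx])
  have gen: "ny (P (y - tt *\<^sub>R z)) \<le> L / 2 * tt\<^sup>2 * (p / \<mu>)\<^sup>2 + (1 - tt) * p"
  proof -
    have eq: "P (y - tt *\<^sub>R z) = (P (y - tt *\<^sub>R z) - P y + tt *\<^sub>R (P' y *v z)) + (1 - tt) *\<^sub>R P y"
      using feas by (simp add: algebra_simps)
    have "ny (P (y - tt *\<^sub>R z)) \<le> ny (P (y - tt *\<^sub>R z) - P y + tt *\<^sub>R (P' y *v z)) + ny ((1 - tt) *\<^sub>R P y)"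
      by (subst eq) (rule isn_tri[OF ny])
    also have "ny ((1 - tt) *\<^sub>R P y) = (1 - tt) * p" using t01 by (simp add: isn_scale[OF ny] p_def)
    also have "ny (P (y - tt *\<^sub>R z) - P y + tt *\<^sub>R (P' y *v z)) \<le> L / 2 * tt\<^sup>2 * (nx z)\<^sup>2"
      by (rule taylor_bound[OF nx ny deriv lip t01(1)])
    also have "\<dots> \<le> L / 2 * tt\<^sup>2 * (p / \<mu>)\<^sup>2"
      using L nz0 zb by (intro mult_left_mono power_mono) (auto simp: p_def)
    finally show ?thesis by simp
  qed
  show "nx ((y - tt *\<^sub>R z) - y) \<le> ny (P y) / \<mu>"
  proof -
    have "nx ((y - tt *\<^sub>R z) - y) = tt * nx z" using t01 isn_minus[OF nx, of "tt *\<^sub>R z"]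
      by (simp add: isn_scale[OF nx])
    also have "\<dots> \<le> 1 * (ny (P y) / \<mu>)" using t01 nz0 zb by (intro mult_mono) auto
    finally show ?thesis by simp
  qed
  have big: "ny (P (y - tt *\<^sub>R z)) \<le> ny (P y) - \<mu>\<^sup>2 / (2 * L)" if h: "ny (P y) \<ge> \<mu>\<^sup>2 / L"
  proof -
    have pp: "p > 0" using h mu L unfolding p_def by (smt (verit) divide_pos_pos zero_less_power)
    have le1: "\<mu>\<^sup>2 / (L * p) \<le> 1" using h pp L by (simp add: p_def field_simps)
    have Pn: "P y \<noteq> 0" using pp isn_zero[OF ny] unfolding p_def by auto
    have tv: "tt = \<mu>\<^sup>2 / (L * p)" using Pn le1 unfolding tt p_def by simp
    have "L / 2 * tt\<^sup>2 * (p / \<mu>)\<^sup>2 = \<mu>\<^sup>2 / (2 * L)" using pp L mu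
      by (simp add: tv field_simps power2_eq_square)
    moreover have "(1 - tt) * p = p - \<mu>\<^sup>2 / L" using pp L by (simp add: tv field_simps)
    ultimately show ?thesis using gen unfolding p_def by simp
  qed
  have small: "ny (P (y - tt *\<^sub>R z)) \<le> ny (P y) / 2" if h: "ny (P y) < \<mu>\<^sup>2 / L"
  proof (cases "p = 0")
    case True
    hence "P y = 0" using isn_eq0[OF ny] unfolding p_def by blast
    thus ?thesis using zz by (simp add: isn_zero[OF ny])
  next
    case False
    hence pp: "p > 0" using p0 by simp
    have "\<mu>\<^sup>2 / (L * p) > 1" using h pp L by (simp add: p_def field_simps)
    hence tv: "tt = 1" using pp unfolding tt p_def by auto
    have "L / 2 * tt\<^sup>2 * (p / \<mu>)\<^sup>2 = p * (L * p / \<mu>\<^sup>2) / 2" using mu by (simp add: tv field_simps power2_eq_square)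
    also have "\<dots> \<le> p * 1 / 2" using h pp L mu by (intro divide_right_mono mult_left_mono) (auto simp: p_def field_simps)
    finally show ?thesis using gen tv unfolding p_def by simp
  qed
  show "ny (P y) \<ge> \<mu>\<^sup>2 / L \<Longrightarrow> ny (P (y - tt *\<^sub>R z)) \<le> ny (P y) - \<mu>\<^sup>2 / (2 * L)" by (rule big)
  show "ny (P y) < \<mu>\<^sup>2 / L \<Longrightarrow> ny (P (y - tt *\<^sub>R z)) \<le> ny (P y) / 2" by (rule small)
  show "ny (P (y - tt *\<^sub>R z)) \<le> ny (P y)"
  proof (cases "ny (P y) \<ge> \<mu>\<^sup>2 / L")
    case True thus ?thesis using big[OF True] L mu by (smt (verit) divide_pos_pos zero_less_power)
  next
    case False thus ?thesis using small p0 unfolding p_def by fastforce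
  qed
qed


theorem corollary4:
  fixes P :: "real^'n \<Rightarrow> real^'m"
    and P' :: "real^'n \<Rightarrow> real^'n^'m"
    and nx :: "real^'n \<Rightarrow> real"
    and ny :: "real^'m \<Rightarrow> real"
    and L \<mu> :: real
    and x :: "nat \<Rightarrow> real^'n"
    and z :: "nat \<Rightarrow> real^'n"
    and x0 :: "real^'n"
  assumes nx: "is_norm nx" and ny: "is_norm ny"
    and deriv: "\<And>a. (P has_derivative (\<lambda>h. P' a *v h)) (at a)"
    and L_pos: "L > 0"
    and lip: "\<And>a b. op_norm nx ny (P' a - P' b) \<le> L * nx (a - b)"
    and mu_pos: "\<mu> > 0"
    and reg: "\<And>a h. dual_norm nx (transpose (P' a) *v h) \<ge> \<mu> * dual_norm ny h"
    and init: "x 0 = x0"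
    and z_feas: "\<And>k. P' (x k) *v z k = P (x k)"
    and z_min: "\<And>k w. P' (x k) *v w = P (x k) \<Longrightarrow> nx (z k) \<le> nx w"
    and z_zero: "\<And>k. P (x k) = 0 \<Longrightarrow> z k = 0"
    and step: "\<And>k. x (Suc k) = x k - (if P (x k) = 0 then 1
                     else min 1 (\<mu>\<^sup>2 / (L * ny (P (x k))))) *\<^sub>R z k"
  shows "\<exists>xs. x \<longlonglongrightarrow> xs \<and> P xs = 0"
proof -
  define p where "p k = ny (P (x k))" for k
  have p0: "p k \<ge> 0" for k unfolding p_def by (rule isn_nonneg[OF ny])
  have zb: "nx (z k) \<le> ny (P (x k)) / \<mu>" for k
  proof -
    obtain w where w: "P' (x k) *v w = P (x k)" "nx w \<le> ny (P (x k)) / \<mu>"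
      using solve_bound[OF nx ny mu_pos reg, of "x k" "P (x k)"] by blast
    show ?thesis using z_min[OF w(1)] w(2) by linarith
  qed
  note os = one_step[OF nx ny deriv lip L_pos mu_pos z_feas zb z_zero refl, folded step]
  have S1: "p (Suc k) \<le> p k" for k using os(1) unfolding p_def .
  have S2: "p k \<ge> \<mu>\<^sup>2 / L \<Longrightarrow> p (Suc k) \<le> p k - \<mu>\<^sup>2 / (2 * L)" for k using os(2) unfolding p_def .
  have S3: "p k < \<mu>\<^sup>2 / L \<Longrightarrow> p (Suc k) \<le> p k / 2" for k using os(3) unfolding p_def .
  have S4: "nx (x (Suc k) - x k) \<le> p k / \<mu>" for k using os(4) unfolding p_def .
  define \<delta> where "\<delta> = \<mu>\<^sup>2 / (2 * L)"
  have d0: "\<delta> > 0" unfolding \<delta>_def using L_pos mu_pos by simp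
  have "\<exists>K. p K < \<mu>\<^sup>2 / L"
  proof (rule ccontr)
    assume "\<not> ?thesis"
    hence big: "p k \<ge> \<mu>\<^sup>2 / L" for k by (simp add: not_less)
    have dec: "p k \<le> p 0 - real k * \<delta>" for k
    proof (induction k)
      case (Suc k)
      have "p (Suc k) \<le> p k - \<delta>" using S2[OF big[of k]] unfolding \<delta>_def .
      moreover have "real (Suc k) * \<delta> = real k * \<delta> + \<delta>" by (simp add: algebra_simps)
      ultimately show ?case using Suc by linarith
    qed simp
    obtain k :: nat where "real k > p 0 / \<delta>" using reals_Archimedean2 by blast
    hence "real k * \<delta> > p 0" using d0 by (simp add: field_simps)
    thus False using dec[of k] p0[of k] by simp
  qed
  then obtain K where K: "p K < \<mu>\<^sup>2 / L" by blast
  have geo: "p (j + K) \<le> p K * (1/2) ^ j" for j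
  proof (induction j)
    case (Suc j)
    have "p K * (1/2) ^ j \<le> p K" using p0[of K] by (simp add: mult_left_le power_le_one)
    hence "p (j + K) < \<mu>\<^sup>2 / L" using Suc K by linarith
    hence "p (Suc (j + K)) \<le> p (j + K) / 2" by (rule S3)
    thus ?case using Suc by simp
  qed simp
  have sp: "summable p"
  proof -
    have "summable (\<lambda>j. p K * (1/2::real) ^ j)" by (intro summable_mult summable_geometric) simp
    hence "summable (\<lambda>j. p (j + K))"
    proof (rule summable_comparison_test'[where N=0])
      fix j show "norm (p (j + K)) \<le> p K * (1/2) ^ j" using geo[of j] p0[of "j + K"] by simp
    qed
    thus ?thesis by simp
  qed
  obtain c where c: "c > 0" "\<And>v. c * norm v \<le> nx v" using isn_lower[OF nx] by blast
  have sd: "summable (\<lambda>k. norm (x (Suc k) - x k))"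
  proof (rule summable_comparison_test'[where N=0])
    show "summable (\<lambda>k. p k / (\<mu> * c))" using sp by (rule summable_divide)
    fix k
    have "c * norm (x (Suc k) - x k) \<le> p k / \<mu>" using c(2) S4 order_trans by blast
    thus "norm (norm (x (Suc k) - x k)) \<le> p k / (\<mu> * c)" using c(1) mu_pos by (simp add: field_simps)
  qed
  hence "summable (\<lambda>k. x (Suc k) - x k)" by (rule summable_norm_cancel)
  then obtain s where s: "(\<lambda>k. x (Suc k) - x k) sums s" unfolding summable_def by blast
  hence "(\<lambda>n. \<Sum>k<n. x (Suc k) - x k) \<longlonglongrightarrow> s" by (simp add: sums_def)
  hence "(\<lambda>n. x n - x 0) \<longlonglongrightarrow> s" by (simp add: sum_lessThan_telescope)
  hence "(\<lambda>n. (x n - x 0) + x 0) \<longlonglongrightarrow> s + x 0" by (intro tendsto_add tendsto_const)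
  hence xl: "x \<longlonglongrightarrow> s + x 0" by simp
  have "isCont P (s + x 0)" by (rule has_derivative_continuous[OF deriv])
  hence l1: "(\<lambda>k. P (x k)) \<longlonglongrightarrow> P (s + x 0)" by (rule isCont_tendsto_compose[OF _ xl])
  obtain cy where cy: "cy > 0" "\<And>v. cy * norm v \<le> ny v" using isn_lower[OF ny] by blast
  have "(\<lambda>k. P (x k)) \<longlonglongrightarrow> 0"
  proof (rule tendsto_norm_zero_cancel, rule tendsto_sandwich[where f="\<lambda>_. 0" and h="\<lambda>k. p k / cy"])
    show "\<forall>\<^sub>F k in sequentially. 0 \<le> norm (P (x k))" by simp
    show "\<forall>\<^sub>F k in sequentially. norm (P (x k)) \<le> p k / cy"
    proof (rule always_eventually, rule allI)
      fix k
      have "cy * norm (P (x k)) \<le> p k" using cy(2) unfolding p_def .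
      thus "norm (P (x k)) \<le> p k / cy" using cy(1) by (simp add: field_simps)
    qed
    show "(\<lambda>_. 0) \<longlonglongrightarrow> (0::real)" by simp
    show "(\<lambda>k. p k / cy) \<longlonglongrightarrow> 0" using tendsto_divide_zero[OF summable_LIMSEQ_zero[OF sp]] by simp
  qed
  hence "P (s + x 0) = 0" using l1 LIMSEQ_unique by blast
  thus ?thesis using xl by blast
qed

end
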